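(* Let $k\geq 2$, let $\mathbb Z_0=\mathbb Z\setminus\{0\}$ and let $\{\lambda_j\}_{j\in\mathbb Z_0}$ be positive numbers. If there is a sequence of positive numbers $\{z_j\}_{j\in\mathbb Z_0}$ satisfying $$z_i=\lambda_i\Bigl(\frac{1}{1+\sum_{j\in\mathbb Z_0}z_j}\Bigr)^{k},\qquad i\in\mathbb Z_0,$$ then both series $\sum_{j\in\mathbb Z_0}z_j$ and $\sum_{j\in\mathbb Z_0}\lambda_j$ converge.
   Context: If $\sum_j z_j=+\infty$, the right-hand side is interpreted as $0$. *)

theory Defs
  imports "HOL-Analysis.Analysis"
begin

end

theory Submission
  imports Defs
begin

theorem mainTheorem3:
  fixes k :: nat and lam z :: "int \<Rightarrow> real"
  assumes k: "k \<ge> 2"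
    and lam_pos: "\<And>j. j \<noteq> 0 \<Longrightarrow> lam j > 0"
    and z_pos: "\<And>j. j \<noteq> 0 \<Longrightarrow> z j > 0"
    and eq: "\<And>i. i \<noteq> 0 \<Longrightarrow>
       z i = lam i * (if z summable_on {j. j \<noteq> 0}
                      then (1 / (1 + infsum z {j. j \<noteq> 0})) ^ k
                      else 0)"
  shows "z summable_on {j::int. j \<noteq> 0} \<and> lam summable_on {j::int. j \<noteq> 0}"
proof -
  have zs: "z summable_on {j. j \<noteq> 0}"
  proof (rule ccontr)
    assume "\<not> ?thesis"
    then have "z 1 = lam 1 * 0" using eq[of 1] by (simp only: if_False one_neq_zero not_False_eq_True simp_thms)
    with z_pos[of 1] show False by simp
  qed
  define c where "c = (1 / (1 + infsum z {j::int. j \<noteq> 0})) ^ k"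
  have S0: "infsum z {j::int. j \<noteq> 0} \<ge> 0"
    by (rule infsum_nonneg) (use z_pos in \<open>fastforce intro: less_imp_le\<close>)
  then have cpos: "c > 0" unfolding c_def by simp
  have eqc: "\<And>i. i \<in> {j. j \<noteq> 0} \<Longrightarrow> lam i = (1 / c) * z i"
  proof -
    fix i :: int assume "i \<in> {j. j \<noteq> 0}"
    then have "i \<noteq> 0" by simp
    then have "z i = lam i * c" using eq[OF \<open>i \<noteq> 0\<close>] zs unfolding c_def by (simp only: if_True not_False_eq_True simp_thms)
    then show "lam i = (1 / c) * z i" using cpos by (simp add: field_simps)
  qed
  have "(\<lambda>i. (1 / c) * z i) summable_on {j::int. j \<noteq> 0}"
    using zs by (rule summable_on_cmult_right)
  then have "lam summable_on {j::int. j \<noteq> 0}"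
    by (subst summable_on_cong[OF eqc]) auto
  with zs show ?thesis by simp
qed

end
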